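(* Let $(C_*,\partial_C,\ell_C)$ and $(D_*,\partial_D,\ell_D)$ be ascending chain complexes over a field $\kappa$ such that each $C_k$ admits an $\ell_C$-orthogonal basis, each $D_k$ admits an $\ell_D$-orthogonal basis, and $C_k=D_k=0$ for all $k<0$. Then every filtered quasi-isomorphism $f\colon C_*\to D_*$ is a filtered homotopy equivalence.
   Context: An ascending chain complex over $\kappa$ is a triple $(C_*,\partial,\ell)$ where $(C_*=\bigoplus_{k\in\mathbb{Z}}C_k,\partial)$ is a chain complex of $\kappa$-vector spaces and $\ell\colon C_*\to\mathbb{R}\cup\{-\infty\}$ satisfies: $\ell(x)=-\infty$ iff $x=0$; $\ell(\sum_i c_ix_i)\le\max\{\ell(x_i): c_i\neq 0\}$, with equality if the $x_i$ lie in pairwise distinct degrees; and $\ell(\partial x)\le\ell(x)$. A subset $S$ of nonzero vectors is $\ell$-orthogonal if $\ell(\sum c_iv_i)=\max\{\ell(v_i):c_i\ne0\}$ for all finitely many distinct $v_i\in S$ and $c_i\in\kappa$. A filtered chain map $f\colon C_*\to D_*$ is a chain map with $\ell_D\circ f\le\ell_C$; it is a filtered quasi-isomorphism if for each $k\in\mathbb{Z}$ and $t\in\mathbb{R}$ the induced map $H_k(C^{\le t}_* )\to H_k(D^{\le t}_* )$ is an isomorphism, where $C^{\le t}_*=\{c:\ell_C(c)\le t\}$. A filtered homotopy equivalence is a filtered chain map $f$ for which there exist a filtered chain map $g\colon D_*\to C_*$ and maps $K^C\colon C_*\to C_{*+1}$, $K^D\colon D_*\to D_{*+1}$ with $\ell_C\circ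 K^C\le\ell_C$, $\ell_D\circ K^D\le\ell_D$, $\partial_CK^C+K^C\partial_C=1-gf$, $\partial_DK^D+K^D\partial_D=1-fg$. *)

theory Defs
  imports Main "HOL-Library.Extended_Real"
begin

(* A graded vector space C_* = (+)_k C_k over a field 'k is represented by a
   family of subspaces  C :: int => 'v set  of one ambient vector space
   (scalar multiplication sc); the summand C_k is  C k.  All data of degree 0
   (resp. +1, -1) on C_* are represented by their degree-k components.
   The filtration function ell on C_* is determined by its values on the
   summands, since ell(sum of elements in distinct degrees) = max of the ell's;
   thus ell is given degreewise as  l k : C k -> ereal  (values in R u {-inf}). *)

definition lin_on :: "('k::field \<Rightarrow> 'v::ab_group_add \<Rightarrow> 'v) \<Rightarrow> ('k \<Rightarrow> 'w::ab_group_add \<Rightarrow> 'w)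
    \<Rightarrow> 'v set \<Rightarrow> ('v \<Rightarrow> 'w) \<Rightarrow> bool" where
  "lin_on sv sw A h \<longleftrightarrow>
     (\<forall>x\<in>A. \<forall>y\<in>A. h (x + y) = h x + h y) \<and> (\<forall>a. \<forall>x\<in>A. h (sv a x) = sw a (h x))"

definition asc_chain_complex ::
  "('k::field \<Rightarrow> 'v::ab_group_add \<Rightarrow> 'v) \<Rightarrow> (int \<Rightarrow> 'v set) \<Rightarrow> (int \<Rightarrow> 'v \<Rightarrow> 'v)
     \<Rightarrow> (int \<Rightarrow> 'v \<Rightarrow> ereal) \<Rightarrow> bool" where
  "asc_chain_complex sc C d l \<longleftrightarrow>
     vector_space sc \<and>
     (\<forall>k. module.subspace sc (C k)) \<and>
     (\<forall>k. \<forall>x\<in>C k. d k x \<in> C (k - 1)) \<and>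
     (\<forall>k. lin_on sc sc (C k) (d k)) \<and>
     (\<forall>k. \<forall>x\<in>C k. d (k - 1) (d k x) = 0) \<and>
     (\<forall>k. \<forall>x\<in>C k. l k x \<noteq> \<infinity> \<and> (l k x = - \<infinity> \<longleftrightarrow> x = 0)) \<and>
     (\<forall>k. \<forall>S c. finite S \<and> S \<subseteq> C k \<longrightarrow>
          l k (\<Sum>x\<in>S. sc (c x) x) \<le> (SUP x\<in>{x\<in>S. c x \<noteq> 0}. l k x)) \<and>
     (\<forall>k. \<forall>x\<in>C k. l (k - 1) (d k x) \<le> l k x)"

definition orth_basis ::
  "('k::field \<Rightarrow> 'v::ab_group_add \<Rightarrow> 'v) \<Rightarrow> 'v set \<Rightarrow> ('v \<Rightarrow> ereal) \<Rightarrow> 'v set \<Rightarrow> bool" where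
  "orth_basis sc Ck lk B \<longleftrightarrow>
     B \<subseteq> Ck \<and> 0 \<notin> B \<and> \<not> module.dependent sc B \<and> module.span sc B = Ck \<and>
     (\<forall>S c. finite S \<and> S \<subseteq> B \<longrightarrow>
          lk (\<Sum>x\<in>S. sc (c x) x) = (SUP x\<in>{x\<in>S. c x \<noteq> 0}. lk x))"

definition filtered_chain_map ::
  "('k::field \<Rightarrow> 'v::ab_group_add \<Rightarrow> 'v) \<Rightarrow> (int \<Rightarrow> 'v set) \<Rightarrow> (int \<Rightarrow> 'v \<Rightarrow> 'v) \<Rightarrow> (int \<Rightarrow> 'v \<Rightarrow> ereal)
   \<Rightarrow> ('k \<Rightarrow> 'w::ab_group_add \<Rightarrow> 'w) \<Rightarrow> (int \<Rightarrow> 'w set) \<Rightarrow> (int \<Rightarrow> 'w \<Rightarrow> 'w) \<Rightarrow> (int \<Rightarrow> 'w \<Rightarrow> ereal)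
   \<Rightarrow> (int \<Rightarrow> 'v \<Rightarrow> 'w) \<Rightarrow> bool" where
  "filtered_chain_map sC C dC lC sD D dD lD f \<longleftrightarrow>
     (\<forall>k. \<forall>x\<in>C k. f k x \<in> D k) \<and>
     (\<forall>k. lin_on sC sD (C k) (f k)) \<and>
     (\<forall>k. \<forall>x\<in>C k. dD k (f k x) = f (k - 1) (dC k x)) \<and>
     (\<forall>k. \<forall>x\<in>C k. lD k (f k x) \<le> lC k x)"

definition sub_le :: "(int \<Rightarrow> 'v set) \<Rightarrow> (int \<Rightarrow> 'v \<Rightarrow> ereal) \<Rightarrow> real \<Rightarrow> int \<Rightarrow> 'v set" where
  "sub_le C l t k = {x \<in> C k. l k x \<le> ereal t}"

(* the map H_k(C^{<=t}) -> H_k(D^{<=t}) induced by f is bijective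
   (written out on cycles and boundaries of the filtered subcomplexes) *)
definition induces_homology_iso ::
  "(int \<Rightarrow> 'v::ab_group_add set) \<Rightarrow> (int \<Rightarrow> 'v \<Rightarrow> 'v) \<Rightarrow> (int \<Rightarrow> 'v \<Rightarrow> ereal)
   \<Rightarrow> (int \<Rightarrow> 'w::ab_group_add set) \<Rightarrow> (int \<Rightarrow> 'w \<Rightarrow> 'w) \<Rightarrow> (int \<Rightarrow> 'w \<Rightarrow> ereal)
   \<Rightarrow> (int \<Rightarrow> 'v \<Rightarrow> 'w) \<Rightarrow> real \<Rightarrow> int \<Rightarrow> bool" where
  "induces_homology_iso C dC lC D dD lD f t k \<longleftrightarrow>
     (\<forall>z\<in>sub_le D lD t k. dD k z = 0 \<longrightarrow>
        (\<exists>c\<in>sub_le C lC t k. dC k c = 0 \<and> (\<exists>y\<in>sub_le D lD t (k + 1). z = f k c + dD (k + 1) y))) \<and>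
     (\<forall>c\<in>sub_le C lC t k. dC k c = 0 \<longrightarrow>
        (\<exists>y\<in>sub_le D lD t (k + 1). f k c = dD (k + 1) y) \<longrightarrow>
        (\<exists>y'\<in>sub_le C lC t (k + 1). c = dC (k + 1) y'))"

definition filtered_quasi_iso where
  "filtered_quasi_iso sC C dC lC sD D dD lD f \<longleftrightarrow>
     filtered_chain_map sC C dC lC sD D dD lD f \<and>
     (\<forall>k t. induces_homology_iso C dC lC D dD lD f t k)"

definition filtered_homotopy_op ::
  "('k::field \<Rightarrow> 'v::ab_group_add \<Rightarrow> 'v) \<Rightarrow> (int \<Rightarrow> 'v set) \<Rightarrow> (int \<Rightarrow> 'v \<Rightarrow> ereal)
   \<Rightarrow> (int \<Rightarrow> 'v \<Rightarrow> 'v) \<Rightarrow> bool" where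
  "filtered_homotopy_op sC C lC K \<longleftrightarrow>
     (\<forall>k. \<forall>x\<in>C k. K k x \<in> C (k + 1)) \<and>
     (\<forall>k. lin_on sC sC (C k) (K k)) \<and>
     (\<forall>k. \<forall>x\<in>C k. lC (k + 1) (K k x) \<le> lC k x)"

definition filtered_homotopy_equiv where
  "filtered_homotopy_equiv sC C dC lC sD D dD lD f \<longleftrightarrow>
     filtered_chain_map sC C dC lC sD D dD lD f \<and>
     (\<exists>g KC KD.
        filtered_chain_map sD D dD lD sC C dC lC g \<and>
        filtered_homotopy_op sC C lC KC \<and>
        filtered_homotopy_op sD D lD KD \<and>
        (\<forall>k. \<forall>x\<in>C k. dC (k + 1) (KC k x) + KC (k - 1) (dC k x) = x - g k (f k x)) \<and>
        (\<forall>k. \<forall>y\<in>D k. dD (k + 1) (KD k y) + KD (k - 1) (dD k y) = y - f k (g k y)))"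

end

theory Submission
  imports Defs
begin

lemma lin_on_0:
  assumes "lin_on s1 s2 A h" "(0::'v::ab_group_add) \<in> A"
  shows "h 0 = (0::'w::ab_group_add)"
proof -
  have "h (0 + 0) = h 0 + h 0" using assms unfolding lin_on_def by blast
  then show ?thesis by simp
qed

lemma lin_on_neg:
  assumes "lin_on s1 s2 A h" "module.subspace s1 A" "module s1" "x \<in> A"
  shows "h (- x) = - h x"
proof -
  have m: "- x \<in> A" using module.subspace_neg[OF assms(3,2,4)] .
  have "h (x + - x) = h x + h (- x)" using assms m unfolding lin_on_def by blast
  moreover have "h 0 = 0" using lin_on_0[OF assms(1) module.subspace_0[OF assms(3,2)]] .
  ultimately show ?thesis by (simp add: add_eq_0_iff)
qed

lemma lin_on_diff:
  assumes "lin_on s1 s2 A h" "module.subspace s1 A" "module s1" "x \<in> A" "y \<in> A"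
  shows "h (x - y) = h x - h y"
proof -
  have m: "- y \<in> A" using module.subspace_neg[OF assms(3,2,5)] .
  have "h (x + - y) = h x + h (- y)" using assms m unfolding lin_on_def by blast
  then show ?thesis using lin_on_neg[OF assms(1-3,5)] by simp
qed

lemma lin_on_add:
  assumes "lin_on s1 s2 A h" "x \<in> A" "y \<in> A"
  shows "h (x + y) = h x + h y"
  using assms unfolding lin_on_def by blast

lemma lin_on_comp:
  assumes "lin_on s1 s2 A h1" "\<forall>x\<in>A. h1 x \<in> A'" "lin_on s2 s3 A' h2"
  shows "lin_on s1 s3 A (\<lambda>x. h2 (h1 x))"
  using assms unfolding lin_on_def by (simp add: Ball_def)

lemma lin_on_plus:
  assumes "lin_on s1 s2 A h1" "lin_on s1 s2 A h2" "module s2"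
  shows "lin_on s1 s2 A (\<lambda>x. h1 x + h2 x)"
  using assms unfolding lin_on_def by (simp add: module.scale_right_distrib algebra_simps)

lemma lin_on_minus:
  assumes "lin_on s1 s2 A h1" "lin_on s1 s2 A h2" "module s2"
  shows "lin_on s1 s2 A (\<lambda>x. h1 x - h2 x)"
  using assms unfolding lin_on_def by (simp add: module.scale_right_diff_distrib algebra_simps)

lemma lin_on_id: "lin_on s s A (\<lambda>x. x)"
  unfolding lin_on_def by simp

lemma lin_on_zero: "module s2 \<Longrightarrow> lin_on s1 s2 A (\<lambda>x. 0)"
  unfolding lin_on_def by (simp add: module.scale_zero_right)

lemma lin_on_sum:
  assumes "lin_on s1 s2 A h" "module.subspace s1 A" "module s1" "module s2" "finite S" "S \<subseteq> A"
  shows "h (\<Sum>a\<in>S. s1 (r a) a) = (\<Sum>a\<in>S. s2 (r a) (h a))"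
  using assms(5,6)
proof (induction S rule: finite_induct)
  case empty
  then show ?case using lin_on_0[OF assms(1)] module.subspace_0[OF assms(3,2)] by simp
next
  case (insert a F)
  have a: "s1 (r a) a \<in> A"
    by (rule module.subspace_scale[OF assms(3,2)]) (use insert.prems in auto)
  have F: "(\<Sum>a\<in>F. s1 (r a) a) \<in> A"
    by (rule module.subspace_sum[OF assms(3,2)]) (use insert.prems module.subspace_scale[OF assms(3,2)] in auto)
  have "h (\<Sum>a\<in>insert a F. s1 (r a) a) = h (s1 (r a) a + (\<Sum>a\<in>F. s1 (r a) a))"
    using insert by simp
  also have "\<dots> = h (s1 (r a) a) + h (\<Sum>a\<in>F. s1 (r a) a)" using lin_on_add[OF assms(1) a F] .
  also have "\<dots> = s2 (r a) (h a) + (\<Sum>a\<in>F. s2 (r a) (h a))"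
    using insert assms(1) unfolding lin_on_def by auto
  finally show ?case using insert by simp
qed

lemma lin_on_zero_span:
  assumes "lin_on s1 s2 A h" "module.span s1 B = A" "module s1" "module s2"
    "\<forall>e\<in>B. h e = 0" "x \<in> A"
  shows "h x = 0"
proof -
  have sub: "module.subspace s1 A" using module.subspace_span[OF assms(3), of B] assms(2) by simp
  have Bsub: "B \<subseteq> A" using module.span_superset[OF assms(3), of B] assms(2) by simp
  obtain t r where t: "finite t" "t \<subseteq> B" "x = (\<Sum>a\<in>t. s1 (r a) a)"
    using assms(6) unfolding assms(2)[symmetric] module.span_explicit[OF assms(3)] by blast
  have "h x = (\<Sum>a\<in>t. s2 (r a) (h a))"
    using lin_on_sum[OF assms(1) sub assms(3,4) t(1)] t Bsub by auto
  also have "\<dots> = 0" using t assms(5) module.scale_zero_right[OF assms(4)]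
    by (intro sum.neutral) auto
  finally show ?thesis .
qed

lemma acc_vs0:
  assumes "asc_chain_complex sc C d l"
  shows "vector_space sc"
  using assms unfolding asc_chain_complex_def by (elim conjE) assumption

lemma acc_sub0:
  assumes "asc_chain_complex sc C d l"
  shows "\<forall>k. module.subspace sc (C k)"
  using assms unfolding asc_chain_complex_def by (elim conjE) assumption

lemma acc_d0':
  assumes "asc_chain_complex sc C d l"
  shows "\<forall>k. \<forall>x\<in>C k. d k x \<in> C (k - 1)"
  using assms unfolding asc_chain_complex_def by (elim conjE) assumption

lemma acc_dlin0:
  assumes "asc_chain_complex sc C d l"
  shows "\<forall>k. lin_on sc sc (C k) (d k)"
  using assms unfolding asc_chain_complex_def by (elim conjE) assumption

lemma acc_dd0:
  assumes "asc_chain_complex sc C d l"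
  shows "\<forall>k. \<forall>x\<in>C k. d (k - 1) (d k x) = 0"
  using assms unfolding asc_chain_complex_def by (elim conjE) assumption

lemma acc_lv0:
  assumes "asc_chain_complex sc C d l"
  shows "\<forall>k. \<forall>x\<in>C k. l k x \<noteq> \<infinity> \<and> (l k x = - \<infinity> \<longleftrightarrow> x = 0)"
  using assms unfolding asc_chain_complex_def by (elim conjE) assumption

lemma acc_lsub0:
  assumes "asc_chain_complex sc C d l"
  shows "\<forall>k. \<forall>S c. finite S \<and> S \<subseteq> C k \<longrightarrow>
          l k (\<Sum>x\<in>S. sc (c x) x) \<le> (SUP x\<in>{x\<in>S. c x \<noteq> 0}. l k x)"
  using assms unfolding asc_chain_complex_def by (elim conjE) assumption

lemma acc_dl0:
  assumes "asc_chain_complex sc C d l"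
  shows "\<forall>k. \<forall>x\<in>C k. l (k - 1) (d k x) \<le> l k x"
  using assms unfolding asc_chain_complex_def by (elim conjE) assumption

lemma acc_vs: "asc_chain_complex sc C d l \<Longrightarrow> module sc"
  using acc_vs0 module_iff_vector_space by blast

lemma acc_sub: "asc_chain_complex sc C d l \<Longrightarrow> module.subspace sc (C k)"
  using acc_sub0 by blast

lemma acc_d: "asc_chain_complex sc C d l \<Longrightarrow> x \<in> C k \<Longrightarrow> d k x \<in> C (k - 1)"
  using acc_d0' by blast

lemma acc_dlin: "asc_chain_complex sc C d l \<Longrightarrow> lin_on sc sc (C k) (d k)"
  using acc_dlin0 by blast

lemma acc_dd: "asc_chain_complex sc C d l \<Longrightarrow> x \<in> C k \<Longrightarrow> d (k - 1) (d k x) = 0"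
  using acc_dd0 by blast

lemma acc_dl: "asc_chain_complex sc C d l \<Longrightarrow> x \<in> C k \<Longrightarrow> l (k - 1) (d k x) \<le> l k x"
  using acc_dl0 by blast

lemma acc_lbot: "asc_chain_complex sc C d l \<Longrightarrow> x \<in> C k \<Longrightarrow> l k x = - \<infinity> \<longleftrightarrow> x = 0"
  using acc_lv0 by blast

lemma acc_ltop: "asc_chain_complex sc C d l \<Longrightarrow> x \<in> C k \<Longrightarrow> l k x \<noteq> \<infinity>"
  using acc_lv0 by blast

lemma acc_0: assumes "asc_chain_complex sc C d l" shows "0 \<in> C k"
  using module.subspace_0[OF acc_vs[OF assms] acc_sub[OF assms]] .

lemma acc_d0: assumes "asc_chain_complex sc C d l" shows "d k 0 = 0"
  using lin_on_0[OF acc_dlin[OF assms] acc_0[OF assms]] .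

lemma acc_l0: "asc_chain_complex sc C d l \<Longrightarrow> l k 0 = - \<infinity>"
  using acc_0 acc_lbot by blast

lemma acc_lfin: "asc_chain_complex sc C d l \<Longrightarrow> x \<in> C k \<Longrightarrow> x \<noteq> 0 \<Longrightarrow> \<exists>r. l k x = ereal r"
proof -
  assume a: "asc_chain_complex sc C d l" "x \<in> C k" "x \<noteq> 0"
  then have "l k x \<noteq> \<infinity>" "l k x \<noteq> - \<infinity>" using acc_lbot acc_ltop by blast+
  then show ?thesis by (cases "l k x") auto
qed

lemma acc_lscale:
  assumes "asc_chain_complex sc C d l" "x \<in> C k"
  shows "l k (sc a x) \<le> l k x"
proof -
  have "finite {x} \<and> {x} \<subseteq> C k \<longrightarrow> l k (\<Sum>y\<in>{x}. sc ((\<lambda>_. a) y) y) \<le> (SUP y\<in>{y\<in>{x}. (\<lambda>_. a) y \<noteq> 0}. l k y)"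
    using spec[OF spec[OF spec[OF acc_lsub0[OF assms(1)], of k], of "{x}"], of "\<lambda>_. a"] .
  then have "l k (\<Sum>y\<in>{x}. sc ((\<lambda>_. a) y) y) \<le> (SUP y\<in>{y\<in>{x}. (\<lambda>_. a) y \<noteq> 0}. l k y)"
    using assms(2) by simp
  then show ?thesis by (cases "a = 0") (auto simp: bot_unique)
qed

lemma acc_ladd:
  assumes "asc_chain_complex sc C d l" "x \<in> C k" "y \<in> C k"
  shows "l k (x + y) \<le> max (l k x) (l k y)"
proof (cases "x = y")
  case True
  have M: "module sc" using acc_vs assms by blast
  have "x + y = sc (1 + 1) x" using True module.scale_left_distrib[OF M, of 1 1 x] module.scale_one[OF M] by simp
  then show ?thesis using acc_lscale[OF assms(1,2)] True by simp
next
  case False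
  have H: "\<forall>S c. finite S \<and> S \<subseteq> C k \<longrightarrow>
          l k (\<Sum>x\<in>S. sc (c x) x) \<le> (SUP x\<in>{x\<in>S. c x \<noteq> 0}. l k x)"
    using spec[OF acc_lsub0[OF assms(1)], of k] .
  have "l k (\<Sum>z\<in>{x,y}. sc ((\<lambda>_. 1) z) z) \<le> (SUP z\<in>{z\<in>{x,y}. (\<lambda>_. (1::'a)) z \<noteq> 0}. l k z)"
    using H[rule_format, of "{x,y}" "\<lambda>_. 1"] assms(2,3) by simp
  moreover have "{z\<in>{x,y}. (\<lambda>_. (1::'a)) z \<noteq> 0} = {x,y}" by auto
  moreover have "(\<Sum>z\<in>{x,y}. sc ((\<lambda>_. 1) z) z) = x + y"
    using False module.scale_one[OF acc_vs[OF assms(1)]] by simp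
  ultimately show ?thesis by (simp add: sup_max)
qed

lemma acc_lneg:
  assumes "asc_chain_complex sc C d l" "x \<in> C k"
  shows "l k (- x) \<le> l k x"
proof -
  have M: "module sc" using acc_vs assms by blast
  have "- x = sc (-1) x" by (simp add: module.scale_minus_left[OF M] module.scale_one[OF M])
  then show ?thesis using acc_lscale[OF assms] by simp
qed

lemma acc_lsum:
  assumes "asc_chain_complex sc C d l" "finite S" "\<forall>i\<in>S. w i \<in> C k \<and> l k (w i) \<le> t"
  shows "l k (sum w S) \<le> t \<and> sum w S \<in> C k"
  using assms(2,3)
proof (induction S rule: finite_induct)
  case empty
  then show ?case using acc_l0[OF assms(1)] acc_0[OF assms(1)] by simp
next
  case (insert a F)
  then have wa: "w a \<in> C k" "l k (w a) \<le> t" "sum w F \<in> C k" "l k (sum w F) \<le> t" by auto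
  have "l k (w a + sum w F) \<le> max (l k (w a)) (l k (sum w F))" using acc_ladd[OF assms(1) wa(1,3)] .
  also have "\<dots> \<le> t" using wa(2,4) by simp
  finally have "l k (w a + sum w F) \<le> t" .
  moreover have "w a + sum w F \<in> C k" using insert module.subspace_add[OF acc_vs[OF assms(1)] acc_sub[OF assms(1)]]
    by simp
  ultimately show ?case using insert by simp
qed

lemma acc_lplus:
  assumes "asc_chain_complex sc C d l" "x \<in> C k" "y \<in> C k" "l k x \<le> t" "l k y \<le> t"
  shows "l k (x + y) \<le> t"
  by (rule order_trans[OF acc_ladd[OF assms(1-3)]]) (simp add: assms(4,5))

lemma acc_lminus:
  assumes "asc_chain_complex sc C d l" "x \<in> C k" "y \<in> C k" "l k x \<le> t" "l k y \<le> t"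
  shows "l k (x - y) \<le> t"
proof -
  have "- y \<in> C k" using module.subspace_neg[OF acc_vs[OF assms(1)] acc_sub[OF assms(1)] assms(3)] .
  then show ?thesis using acc_lplus[OF assms(1,2), of "- y" t] acc_lneg[OF assms(1,3)] assms by simp
qed

lemma ext_basis:
  assumes M1: "module s1" and aD: "asc_chain_complex s2 D d l" and ob: "orth_basis s1 A lA B"
    and phi: "\<forall>e\<in>B. \<phi> e \<in> D j \<and> l j (\<phi> e) \<le> lA e"
  shows "\<exists>F. (\<forall>e\<in>B. F e = \<phi> e) \<and> lin_on s1 s2 A F \<and> (\<forall>x\<in>A. F x \<in> D j \<and> l j (F x) \<le> lA x)"
proof -
  have M2: "module s2" using acc_vs[OF aD] .
  have VP: "vector_space_pair s1 s2" unfolding vector_space_pair_def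
    using M1 M2 by (simp add: module_iff_vector_space)
  have ind: "\<not> module.dependent s1 B"
    using ob unfolding orth_basis_def by (elim conjE) assumption
  have spanB: "module.span s1 B = A"
    using ob unfolding orth_basis_def by (elim conjE) assumption
  have orth: "\<forall>S c. finite S \<and> S \<subseteq> B \<longrightarrow> lA (\<Sum>x\<in>S. s1 (c x) x) = (SUP x\<in>{x\<in>S. c x \<noteq> 0}. lA x)"
    using ob unfolding orth_basis_def by (elim conjE) assumption
  define F where "F = vector_space_pair.construct s1 s2 B \<phi>"
  have lin: "Vector_Spaces.linear s1 s2 F" unfolding F_def using vector_space_pair.linear_construct[OF VP] ind by blast
  interpret L: Vector_Spaces.linear s1 s2 F by (rule lin)
  have bas: "\<forall>e\<in>B. F e = \<phi> e" unfolding F_def using vector_space_pair.construct_basis[OF VP] ind by blast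
  have lo: "lin_on s1 s2 A F" unfolding lin_on_def using L.add L.scale by blast
  have bnd: "F x \<in> D j \<and> l j (F x) \<le> lA x" if x: "x \<in> A" for x
  proof -
    obtain t r where t: "finite t" "t \<subseteq> B" "x = (\<Sum>a\<in>t. s1 (r a) a)"
      using x unfolding spanB[symmetric] module.span_explicit[OF M1] by blast
    have Fx: "F x = (\<Sum>a\<in>t. s2 (r a) (\<phi> a))"
      using t bas by (simp add: L.sum L.scale subset_iff)
    have lx: "lA x = (SUP a\<in>{a\<in>t. r a \<noteq> 0}. lA a)" using orth t by blast
    have "\<forall>a\<in>t. s2 (r a) (\<phi> a) \<in> D j \<and> l j (s2 (r a) (\<phi> a)) \<le> lA x"
    proof
      fix a assume a: "a \<in> t"
      have pa: "\<phi> a \<in> D j" "l j (\<phi> a) \<le> lA a" using phi a t by auto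
      have inD: "s2 (r a) (\<phi> a) \<in> D j" using module.subspace_scale[OF M2 acc_sub[OF aD] pa(1)] .
      show "s2 (r a) (\<phi> a) \<in> D j \<and> l j (s2 (r a) (\<phi> a)) \<le> lA x"
      proof (cases "r a = 0")
        case True
        then show ?thesis using inD acc_l0[OF aD] module.scale_zero_left[OF M2] by simp
      next
        case False
        have "l j (s2 (r a) (\<phi> a)) \<le> l j (\<phi> a)" using acc_lscale[OF aD pa(1)] .
        also have "\<dots> \<le> lA a" by (rule pa(2))
        also have "\<dots> \<le> lA x" unfolding lx using a False by (intro SUP_upper) auto
        finally show ?thesis using inD by simp
      qed
    qed
    then show ?thesis using acc_lsum[OF aD t(1), of "\<lambda>a. s2 (r a) (\<phi> a)" j "lA x"] Fx by simp
  qed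
  show ?thesis using bas lo bnd by blast
qed

lemma cone_acyc_real:
  assumes aC: "asc_chain_complex sC C dC lC" and aD: "asc_chain_complex sD D dD lD"
    and fcm: "filtered_chain_map sC C dC lC sD D dD lD f"
    and qi: "\<forall>k t. induces_homology_iso C dC lC D dD lD f t k"
    and c: "c \<in> C (n - 1)" and y: "y \<in> D n" and dc: "dC (n - 1) c = 0"
    and cy: "f (n - 1) c + dD n y = 0" and lc: "lC (n - 1) c \<le> ereal r" and ly: "lD n y \<le> ereal r"
  shows "\<exists>c'\<in>C n. \<exists>y'\<in>D (n + 1). dC n c' = - c \<and> f n c' + dD (n + 1) y' = y
           \<and> lC n c' \<le> ereal r \<and> lD (n + 1) y' \<le> ereal r"
proof -
  have MC: "module sC" using acc_vs[OF aC] .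
  have MD: "module sD" using acc_vs[OF aD] .
  have fin: "\<forall>k. \<forall>x\<in>C k. f k x \<in> D k" and flin: "\<forall>k. lin_on sC sD (C k) (f k)"
    and fch: "\<forall>k. \<forall>x\<in>C k. dD k (f k x) = f (k - 1) (dC k x)"
    and fl: "\<forall>k. \<forall>x\<in>C k. lD k (f k x) \<le> lC k x"
    using fcm unfolding filtered_chain_map_def by blast+
  have qi1: "induces_homology_iso C dC lC D dD lD f r (n - 1)" using qi by blast
  have qi2: "induces_homology_iso C dC lC D dD lD f r n" using qi by blast
  have ny: "- y \<in> D n" using module.subspace_neg[OF MD acc_sub[OF aD] y] .
  have lny: "lD n (- y) \<le> ereal r" using acc_lneg[OF aD y] ly by simp
  have dny: "dD n (- y) = - dD n y" using lin_on_neg[OF acc_dlin[OF aD] acc_sub[OF aD] MD y] .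
  have fc: "f (n - 1) c = dD n (- y)" using cy dny by (simp add: add_eq_0_iff2)
  have inj: "\<forall>c\<in>sub_le C lC r (n - 1). dC (n - 1) c = 0 \<longrightarrow>
        (\<exists>y\<in>sub_le D lD r (n - 1 + 1). f (n - 1) c = dD (n - 1 + 1) y) \<longrightarrow>
        (\<exists>y'\<in>sub_le C lC r (n - 1 + 1). c = dC (n - 1 + 1) y')"
    using qi1 unfolding induces_homology_iso_def by (rule conjunct2)
  have cs: "c \<in> sub_le C lC r (n - 1)" using c lc unfolding sub_le_def by simp
  have nys: "- y \<in> sub_le D lD r (n - 1 + 1)" using ny lny unfolding sub_le_def by simp
  have "\<exists>y'\<in>sub_le C lC r (n - 1 + 1). c = dC (n - 1 + 1) y'"
    using inj[rule_format, OF cs dc] nys fc by auto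
  then obtain y2 where y2: "y2 \<in> sub_le C lC r n" "c = dC n y2" by auto
  have y2C: "y2 \<in> C n" and ly2: "lC n y2 \<le> ereal r" using y2 unfolding sub_le_def by auto
  have fy2: "f n y2 \<in> D n" using fin y2C by blast
  have "lD n (f n y2) \<le> lC n y2" using fl y2C by blast
  then have lfy2: "lD n (f n y2) \<le> ereal r" using ly2 by (rule order_trans)
  define z where "z = y + f n y2"
  have zD: "z \<in> D n" unfolding z_def using module.subspace_add[OF MD acc_sub[OF aD] y fy2] .
  have lz: "lD n z \<le> ereal r" unfolding z_def using acc_lplus[OF aD y fy2 ly lfy2] .
  have "dD n z = dD n y + dD n (f n y2)" unfolding z_def using lin_on_add[OF acc_dlin[OF aD] y fy2] .
  also have "\<dots> = dD n y + f (n - 1) (dC n y2)" using fch y2C by simp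
  also have "\<dots> = dD n y + f (n - 1) c" using y2(2) by simp
  also have "\<dots> = 0" using cy by (simp add: add.commute)
  finally have dz: "dD n z = 0" .
  have sur: "\<forall>z\<in>sub_le D lD r n. dD n z = 0 \<longrightarrow>
        (\<exists>c\<in>sub_le C lC r n. dC n c = 0 \<and> (\<exists>y\<in>sub_le D lD r (n + 1). z = f n c + dD (n + 1) y))"
    using qi2 unfolding induces_homology_iso_def by (rule conjunct1)
  have zs: "z \<in> sub_le D lD r n" using zD lz unfolding sub_le_def by simp
  obtain c0 w where c0: "c0 \<in> sub_le C lC r n" "dC n c0 = 0" and w: "w \<in> sub_le D lD r (n + 1)"
    and zeq: "z = f n c0 + dD (n + 1) w"
    using sur[rule_format, OF zs dz] by blast
  have c0C: "c0 \<in> C n" and lc0: "lC n c0 \<le> ereal r" using c0 unfolding sub_le_def by auto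
  have wD: "w \<in> D (n + 1)" and lw: "lD (n + 1) w \<le> ereal r" using w unfolding sub_le_def by auto
  define c' where "c' = c0 - y2"
  have c'C: "c' \<in> C n" unfolding c'_def using module.subspace_diff[OF MC acc_sub[OF aC] c0C y2C] .
  have "dC n c' = dC n c0 - dC n y2" unfolding c'_def using lin_on_diff[OF acc_dlin[OF aC] acc_sub[OF aC] MC c0C y2C] .
  then have e1: "dC n c' = - c" using c0 y2 by simp
  have flinn: "lin_on sC sD (C n) (f n)" using flin by blast
  have "f n c' = f n c0 - f n y2" unfolding c'_def using lin_on_diff[OF flinn acc_sub[OF aC] MC c0C y2C] .
  then have "f n c' + dD (n + 1) w = (f n c0 + dD (n + 1) w) - f n y2" by (simp add: algebra_simps)
  also have "\<dots> = z - f n y2" using zeq by simp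
  also have "\<dots> = y" unfolding z_def by simp
  finally have e2: "f n c' + dD (n + 1) w = y" .
  have lc': "lC n c' \<le> ereal r" unfolding c'_def using acc_lminus[OF aC c0C y2C lc0 ly2] .
  show ?thesis using c'C wD e1 e2 lc' lw by blast
qed

lemma cone_acyc:
  assumes aC: "asc_chain_complex sC C dC lC" and aD: "asc_chain_complex sD D dD lD"
    and fcm: "filtered_chain_map sC C dC lC sD D dD lD f"
    and qi: "\<forall>k t. induces_homology_iso C dC lC D dD lD f t k"
    and c: "c \<in> C (n - 1)" and y: "y \<in> D n" and dc: "dC (n - 1) c = 0"
    and cy: "f (n - 1) c + dD n y = 0" and lc: "lC (n - 1) c \<le> t" and ly: "lD n y \<le> t"
  shows "\<exists>c'\<in>C n. \<exists>y'\<in>D (n + 1). dC n c' = - c \<and> f n c' + dD (n + 1) y' = y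
           \<and> lC n c' \<le> t \<and> lD (n + 1) y' \<le> t"
proof (cases "c = 0 \<and> y = 0")
  case True
  have "lin_on sC sD (C n) (f n)" using fcm unfolding filtered_chain_map_def by blast
  then have "f n 0 = 0" using acc_0[OF aC] lin_on_0 by blast
  then show ?thesis using True acc_0[OF aC] acc_0[OF aD] acc_d0[OF aC] acc_d0[OF aD] acc_l0[OF aC] acc_l0[OF aD]
    by (intro bexI[of _ 0]) auto
next
  case False
  define t0 where "t0 = max (lC (n - 1) c) (lD n y)"
  have nb: "t0 \<noteq> - \<infinity>"
  proof
    assume "t0 = - \<infinity>"
    then have "lC (n - 1) c = - \<infinity>" "lD n y = - \<infinity>" unfolding t0_def by (auto simp: max_def split: if_splits)
    then show False using False acc_lbot[OF aC c] acc_lbot[OF aD y] by blast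
  qed
  have nt: "t0 \<noteq> \<infinity>" using acc_ltop[OF aC c] acc_ltop[OF aD y] unfolding t0_def by (auto simp: max_def)
  obtain r where r: "t0 = ereal r" using nb nt by (cases t0) auto
  have "\<exists>c'\<in>C n. \<exists>y'\<in>D (n + 1). dC n c' = - c \<and> f n c' + dD (n + 1) y' = y
           \<and> lC n c' \<le> ereal r \<and> lD (n + 1) y' \<le> ereal r"
  proof (rule cone_acyc_real[OF aC aD fcm qi c y dc cy])
    have "lC (n - 1) c \<le> t0" "lD n y \<le> t0" unfolding t0_def by simp_all
    then show "lC (n - 1) c \<le> ereal r" "lD n y \<le> ereal r" using r by simp_all
  qed
  moreover have "ereal r \<le> t" using r lc ly unfolding t0_def by (metis max.boundedI)
  ultimately show ?thesis by (meson order_trans)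
qed

lemma fcm_in: assumes "filtered_chain_map sC C dC lC sD D dD lD f" "x \<in> C k" shows "f k x \<in> D k"
proof -
  have "\<forall>k. \<forall>x\<in>C k. f k x \<in> D k" using assms(1) unfolding filtered_chain_map_def by (elim conjE) assumption
  then show ?thesis using assms(2) by blast
qed

lemma fcm_lin: assumes "filtered_chain_map sC C dC lC sD D dD lD f" shows "lin_on sC sD (C k) (f k)"
proof -
  have "\<forall>k. lin_on sC sD (C k) (f k)" using assms(1) unfolding filtered_chain_map_def by (elim conjE) assumption
  then show ?thesis by blast
qed

lemma fcm_ch: assumes "filtered_chain_map sC C dC lC sD D dD lD f" "x \<in> C k"
  shows "dD k (f k x) = f (k - 1) (dC k x)"
proof -
  have "\<forall>k. \<forall>x\<in>C k. dD k (f k x) = f (k - 1) (dC k x)" using assms(1) unfolding filtered_chain_map_def by (elim conjE) assumption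
  then show ?thesis using assms(2) by blast
qed

lemma fcm_l: assumes "filtered_chain_map sC C dC lC sD D dD lD f" "x \<in> C k"
  shows "lD k (f k x) \<le> lC k x"
proof -
  have "\<forall>k. \<forall>x\<in>C k. lD k (f k x) \<le> lC k x" using assms(1) unfolding filtered_chain_map_def by (elim conjE) assumption
  then show ?thesis using assms(2) by blast
qed

definition good where
"good sC C dC lC sD D dD lD f n g' KD' KC' M' g KD KC M \<longleftrightarrow>
  (\<forall>y\<in>D n. g y \<in> C n \<and> lC n (g y) \<le> lD n y \<and> KD y \<in> D (n + 1) \<and> lD (n + 1) (KD y) \<le> lD n y) \<and>
  (\<forall>x\<in>C (n - 1). KC x \<in> C n \<and> lC n (KC x) \<le> lC (n - 1) x \<and> M x \<in> D (n + 1) \<and> lD (n + 1) (M x) \<le> lC (n - 1) x) \<and>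
  lin_on sD sC (D n) g \<and> lin_on sD sD (D n) KD \<and> lin_on sC sC (C (n - 1)) KC \<and> lin_on sC sD (C (n - 1)) M \<and>
  g' 0 = 0 \<and> KD' 0 = 0 \<and> KC' 0 = 0 \<and> M' 0 = 0 \<and>
  (\<forall>y\<in>D n. dC n (g y) = g' (dD n y)) \<and>
  (\<forall>y\<in>D n. dD (n + 1) (KD y) + KD' (dD n y) = y - f n (g y)) \<and>
  (\<forall>x\<in>C (n - 1). dC n (KC x) + KC' (dC (n - 1) x) = x - g' (f (n - 1) x)) \<and>
  (\<forall>x\<in>C (n - 1). dD (n + 1) (M x) - f n (KC x) - M' (dC (n - 1) x) + KD' (f (n - 1) x) = 0)"

lemma good_base:
  assumes aC: "asc_chain_complex sC C dC lC" and aD: "asc_chain_complex sD D dD lD"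
    and fcm: "filtered_chain_map sC C dC lC sD D dD lD f"
    and C0: "\<forall>k<0. C k = {0}" and D0: "\<forall>k<0. D k = {0}"
  shows "good sC C dC lC sD D dD lD f (-1) (\<lambda>_. 0) (\<lambda>_. 0) (\<lambda>_. 0) (\<lambda>_. 0) (\<lambda>_. 0) (\<lambda>_. 0) (\<lambda>_. 0) (\<lambda>_. 0)"
proof -
  have MC: "module sC" using acc_vs[OF aC] .
  have MD: "module sD" using acc_vs[OF aD] .
  have c2: "C (-2) = {0}" using C0 by simp
  have d1: "D (-1) = {0}" using D0 by simp
  have f0: "f (-1) 0 = 0" using lin_on_0[OF fcm_lin[OF fcm] acc_0[OF aC]] .
  show ?thesis unfolding good_def
    using c2 d1 f0 acc_0[OF aC] acc_0[OF aD] acc_l0[OF aC] acc_l0[OF aD] acc_d0[OF aC] acc_d0[OF aD]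
      module.scale_zero_right[OF MC] module.scale_zero_right[OF MD]
    by (simp add: lin_on_def)
qed

lemma good_step:
  assumes aC: "asc_chain_complex sC C dC lC" and aD: "asc_chain_complex sD D dD lD"
    and fcm: "filtered_chain_map sC C dC lC sD D dD lD f"
    and qi: "\<forall>k t. induces_homology_iso C dC lC D dD lD f t k"
    and obC: "\<forall>k. \<exists>B. orth_basis sC (C k) (lC k) B"
    and obD: "\<forall>k. \<exists>B. orth_basis sD (D k) (lD k) B"
    and prev: "good sC C dC lC sD D dD lD f (n - 1) g2 KD2 KC2 M2 g1 KD1 KC1 M1"
  shows "\<exists>g KD KC M. good sC C dC lC sD D dD lD f n g1 KD1 KC1 M1 g KD KC M"
proof -
  have MC: "module sC" using acc_vs[OF aC] .
  have MD: "module sD" using acc_vs[OF aD] .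
  note sC = acc_sub[OF aC] and sD = acc_sub[OF aD]
  note dCin = acc_d[OF aC] and dDin = acc_d[OF aD]
  note dClin = acc_dlin[OF aC] and dDlin = acc_dlin[OF aD]
  note fin = fcm_in[OF fcm] and flin = fcm_lin[OF fcm]
  have pg: "\<forall>y\<in>D (n - 1). g1 y \<in> C (n - 1) \<and> lC (n - 1) (g1 y) \<le> lD (n - 1) y \<and> KD1 y \<in> D n \<and> lD n (KD1 y) \<le> lD (n - 1) y"
    using prev unfolding good_def by simp
  have pc: "\<forall>x\<in>C (n - 1 - 1). KC1 x \<in> C (n - 1) \<and> lC (n - 1) (KC1 x) \<le> lC (n - 1 - 1) x \<and> M1 x \<in> D n \<and> lD n (M1 x) \<le> lC (n - 1 - 1) x"
    using prev unfolding good_def by simp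
  have lg1: "lin_on sD sC (D (n - 1)) g1" and lKD1: "lin_on sD sD (D (n - 1)) KD1"
    and lKC1: "lin_on sC sC (C (n - 1 - 1)) KC1" and lM1: "lin_on sC sD (C (n - 1 - 1)) M1"
    using prev unfolding good_def by simp_all
  have z2: "g2 0 = 0" "KD2 0 = 0" "KC2 0 = 0" "M2 0 = 0"
    using prev unfolding good_def by simp_all
  have E1p: "\<forall>y\<in>D (n - 1). dC (n - 1) (g1 y) = g2 (dD (n - 1) y)"
    using prev unfolding good_def by simp
  have E3p: "\<forall>y\<in>D (n - 1). dD n (KD1 y) + KD2 (dD (n - 1) y) = y - f (n - 1) (g1 y)"
    using prev unfolding good_def by simp
  have E2p: "\<forall>x\<in>C (n - 1 - 1). dC (n - 1) (KC1 x) + KC2 (dC (n - 1 - 1) x) = x - g2 (f (n - 1 - 1) x)"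
    using prev unfolding good_def by simp
  have E4p: "\<forall>x\<in>C (n - 1 - 1). dD n (M1 x) - f (n - 1) (KC1 x) - M2 (dC (n - 1 - 1) x) + KD2 (f (n - 1 - 1) x) = 0"
    using prev unfolding good_def by simp

  have Dcase: "\<exists>p. fst p \<in> C n \<and> snd p \<in> D (n + 1) \<and> dC n (fst p) = g1 (dD n e)
      \<and> f n (fst p) + dD (n + 1) (snd p) = e - KD1 (dD n e)
      \<and> lC n (fst p) \<le> lD n e \<and> lD (n + 1) (snd p) \<le> lD n e" if e: "e \<in> D n" for e
  proof -
    define de where "de = dD n e"
    have de: "de \<in> D (n - 1)" unfolding de_def using dDin[OF e] .
    have lde: "lD (n - 1) de \<le> lD n e" unfolding de_def using acc_dl[OF aD e] .
    have gde: "g1 de \<in> C (n - 1)" "lC (n - 1) (g1 de) \<le> lD (n - 1) de"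
      and kde: "KD1 de \<in> D n" "lD n (KD1 de) \<le> lD (n - 1) de" using pg de by auto
    define c where "c = - g1 de"
    define y where "y = e - KD1 de"
    have cC: "c \<in> C (n - 1)" unfolding c_def using module.subspace_neg[OF MC sC gde(1)] .
    have yD: "y \<in> D n" unfolding y_def using module.subspace_diff[OF MD sD e kde(1)] .
    have dde: "dD (n - 1) de = 0" unfolding de_def using acc_dd[OF aD e] .
    have "dC (n - 1) c = - dC (n - 1) (g1 de)" unfolding c_def using lin_on_neg[OF dClin sC MC gde(1)] .
    also have "\<dots> = 0" using E1p[rule_format, OF de] dde z2 by simp
    finally have dc: "dC (n - 1) c = 0" .
    have fc: "f (n - 1) c = - f (n - 1) (g1 de)" unfolding c_def using lin_on_neg[OF flin sC MC gde(1)] .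
    have dy: "dD n y = dD n e - dD n (KD1 de)" unfolding y_def using lin_on_diff[OF dDlin sD MD e kde(1)] .
    have "dD n (KD1 de) = de - f (n - 1) (g1 de)" using E3p[rule_format, OF de] dde z2 by simp
    then have cy: "f (n - 1) c + dD n y = 0" using fc dy unfolding de_def by simp
    have "lC (n - 1) c \<le> lC (n - 1) (g1 de)" unfolding c_def using acc_lneg[OF aC gde(1)] .
    then have lc: "lC (n - 1) c \<le> lD n e" using gde(2) lde by simp
    have ly: "lD n y \<le> lD n e" unfolding y_def
      by (rule acc_lminus[OF aD e kde(1)]) (use kde(2) lde in simp_all)
    obtain c' y' where cy': "c' \<in> C n" "y' \<in> D (n + 1)" "dC n c' = - c" "f n c' + dD (n + 1) y' = y"
      "lC n c' \<le> lD n e" "lD (n + 1) y' \<le> lD n e"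
      using cone_acyc[OF aC aD fcm qi cC yD dc cy lc ly] by blast
    show ?thesis
      by (rule exI[of _ "(c', y')"]) (use cy' in \<open>simp add: c_def y_def de_def\<close>)
  qed

  have Ccase: "\<exists>p. fst p \<in> C n \<and> snd p \<in> D (n + 1)
      \<and> dC n (fst p) = - (e - KC1 (dC (n - 1) e) - g1 (f (n - 1) e))
      \<and> f n (fst p) + dD (n + 1) (snd p) = M1 (dC (n - 1) e) - KD1 (f (n - 1) e)
      \<and> lC n (fst p) \<le> lC (n - 1) e \<and> lD (n + 1) (snd p) \<le> lC (n - 1) e" if e: "e \<in> C (n - 1)" for e
  proof -
    define de where "de = dC (n - 1) e"
    define fe where "fe = f (n - 1) e"
    have de: "de \<in> C (n - 1 - 1)" unfolding de_def using dCin[OF e] .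
    have lde: "lC (n - 1 - 1) de \<le> lC (n - 1) e" unfolding de_def using acc_dl[OF aC e] .
    have fe: "fe \<in> D (n - 1)" unfolding fe_def using fin[OF e] .
    have lfe: "lD (n - 1) fe \<le> lC (n - 1) e" unfolding fe_def using fcm_l[OF fcm e] .
    have kc: "KC1 de \<in> C (n - 1)" "lC (n - 1) (KC1 de) \<le> lC (n - 1 - 1) de"
      and md: "M1 de \<in> D n" "lD n (M1 de) \<le> lC (n - 1 - 1) de" using pc de by auto
    have gf: "g1 fe \<in> C (n - 1)" "lC (n - 1) (g1 fe) \<le> lD (n - 1) fe"
      and kf: "KD1 fe \<in> D n" "lD n (KD1 fe) \<le> lD (n - 1) fe" using pg fe by auto
    define c1 where "c1 = e - KC1 de"
    have c1C: "c1 \<in> C (n - 1)" unfolding c1_def using module.subspace_diff[OF MC sC e kc(1)] .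
    define c where "c = c1 - g1 fe"
    define y where "y = M1 de - KD1 fe"
    have cC: "c \<in> C (n - 1)" unfolding c_def using module.subspace_diff[OF MC sC c1C gf(1)] .
    have yD: "y \<in> D n" unfolding y_def using module.subspace_diff[OF MD sD md(1) kf(1)] .
    have dde: "dC (n - 1 - 1) de = 0" unfolding de_def using acc_dd[OF aC e] .
    have dfe: "dD (n - 1) fe = f (n - 1 - 1) de" unfolding fe_def de_def using fcm_ch[OF fcm e] .
    have "dC (n - 1) c = dC (n - 1) c1 - dC (n - 1) (g1 fe)" unfolding c_def using lin_on_diff[OF dClin sC MC c1C gf(1)] .
    also have "dC (n - 1) c1 = dC (n - 1) e - dC (n - 1) (KC1 de)" unfolding c1_def using lin_on_diff[OF dClin sC MC e kc(1)] .
    also have "dC (n - 1) (KC1 de) = de - g2 (f (n - 1 - 1) de)" using E2p[rule_format, OF de] dde z2 by simp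
    also have "dC (n - 1) (g1 fe) = g2 (f (n - 1 - 1) de)" using E1p[rule_format, OF fe] dfe by simp
    finally have dc: "dC (n - 1) c = 0" unfolding de_def by simp
    have "f (n - 1) c = f (n - 1) c1 - f (n - 1) (g1 fe)" unfolding c_def using lin_on_diff[OF flin sC MC c1C gf(1)] .
    also have "f (n - 1) c1 = fe - f (n - 1) (KC1 de)" unfolding c1_def fe_def using lin_on_diff[OF flin sC MC e kc(1)] .
    finally have fc: "f (n - 1) c = fe - f (n - 1) (KC1 de) - f (n - 1) (g1 fe)" .
    have dy: "dD n y = dD n (M1 de) - dD n (KD1 fe)" unfolding y_def using lin_on_diff[OF dDlin sD MD md(1) kf(1)] .
    have "dD n (M1 de) = f (n - 1) (KC1 de) - KD2 (f (n - 1 - 1) de)"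
      using E4p[rule_format, OF de] dde z2 by (simp add: algebra_simps eq_diff_eq)
    moreover have "dD n (KD1 fe) = fe - f (n - 1) (g1 fe) - KD2 (f (n - 1 - 1) de)"
      using E3p[rule_format, OF fe] dfe by (simp add: algebra_simps eq_diff_eq)
    ultimately have cy: "f (n - 1) c + dD n y = 0" using fc dy by simp
    have lc: "lC (n - 1) c \<le> lC (n - 1) e" unfolding c_def c1_def
      by (intro acc_lminus[OF aC] acc_lminus[OF aC] e kc(1) gf(1) c1C[unfolded c1_def] order_refl)
        (use kc(2) lde gf(2) lfe in simp_all)
    have ly: "lD n y \<le> lC (n - 1) e" unfolding y_def
      by (rule acc_lminus[OF aD md(1) kf(1)]) (use md(2) lde kf(2) lfe in simp_all)
    obtain c' y' where cy': "c' \<in> C n" "y' \<in> D (n + 1)" "dC n c' = - c" "f n c' + dD (n + 1) y' = y"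
      "lC n c' \<le> lC (n - 1) e" "lD (n + 1) y' \<le> lC (n - 1) e"
      using cone_acyc[OF aC aD fcm qi cC yD dc cy lc ly] by blast
    show ?thesis
      by (rule exI[of _ "(c', y')"]) (use cy' in \<open>simp add: c_def c1_def y_def de_def fe_def\<close>)
  qed
  obtain P where P: "\<forall>e\<in>D n. fst (P e) \<in> C n \<and> snd (P e) \<in> D (n + 1) \<and> dC n (fst (P e)) = g1 (dD n e)
      \<and> f n (fst (P e)) + dD (n + 1) (snd (P e)) = e - KD1 (dD n e)
      \<and> lC n (fst (P e)) \<le> lD n e \<and> lD (n + 1) (snd (P e)) \<le> lD n e"
    using bchoice[of "D n"] Dcase by (metis (no_types, lifting))
  obtain Q where Q: "\<forall>e\<in>C (n - 1). fst (Q e) \<in> C n \<and> snd (Q e) \<in> D (n + 1)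
      \<and> dC n (fst (Q e)) = - (e - KC1 (dC (n - 1) e) - g1 (f (n - 1) e))
      \<and> f n (fst (Q e)) + dD (n + 1) (snd (Q e)) = M1 (dC (n - 1) e) - KD1 (f (n - 1) e)
      \<and> lC n (fst (Q e)) \<le> lC (n - 1) e \<and> lD (n + 1) (snd (Q e)) \<le> lC (n - 1) e"
    using bchoice[of "C (n - 1)"] Ccase by (metis (no_types, lifting))
  obtain BD where BD: "orth_basis sD (D n) (lD n) BD" using obD by blast
  obtain BC where BC: "orth_basis sC (C (n - 1)) (lC (n - 1)) BC" using obC by blast
  have BDs: "BD \<subseteq> D n" using BD unfolding orth_basis_def by (elim conjE) assumption
  have spBD: "module.span sD BD = D n" using BD unfolding orth_basis_def by (elim conjE) assumption
  have BCs: "BC \<subseteq> C (n - 1)" using BC unfolding orth_basis_def by (elim conjE) assumption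
  have spBC: "module.span sC BC = C (n - 1)" using BC unfolding orth_basis_def by (elim conjE) assumption
  obtain g where gB: "\<forall>e\<in>BD. g e = fst (P e)" and glin: "lin_on sD sC (D n) g"
      and gin: "\<forall>x\<in>D n. g x \<in> C n \<and> lC n (g x) \<le> lD n x"
    using ext_basis[OF MD aC BD, of "\<lambda>e. fst (P e)" n] P BDs by blast
  obtain KD where KDB: "\<forall>e\<in>BD. KD e = snd (P e)" and KDlin: "lin_on sD sD (D n) KD"
      and KDin: "\<forall>x\<in>D n. KD x \<in> D (n + 1) \<and> lD (n + 1) (KD x) \<le> lD n x"
    using ext_basis[OF MD aD BD, of "\<lambda>e. snd (P e)" "n + 1"] P BDs by blast
  have Qn: "\<forall>e\<in>BC. - fst (Q e) \<in> C n \<and> lC n (- fst (Q e)) \<le> lC (n - 1) e"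
  proof
    fix e assume e: "e \<in> BC"
    then have q: "fst (Q e) \<in> C n" "lC n (fst (Q e)) \<le> lC (n - 1) e" using Q BCs by auto
    show "- fst (Q e) \<in> C n \<and> lC n (- fst (Q e)) \<le> lC (n - 1) e"
      using module.subspace_neg[OF MC sC q(1)] order_trans[OF acc_lneg[OF aC q(1)] q(2)] by simp
  qed
  obtain KC where KCB: "\<forall>e\<in>BC. KC e = - fst (Q e)" and KClin: "lin_on sC sC (C (n - 1)) KC"
      and KCin: "\<forall>x\<in>C (n - 1). KC x \<in> C n \<and> lC n (KC x) \<le> lC (n - 1) x"
    using ext_basis[OF MC aC BC, of "\<lambda>e. - fst (Q e)" n] Qn by blast
  obtain M where MB: "\<forall>e\<in>BC. M e = snd (Q e)" and Mlin: "lin_on sC sD (C (n - 1)) M"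
      and Min: "\<forall>x\<in>C (n - 1). M x \<in> D (n + 1) \<and> lD (n + 1) (M x) \<le> lC (n - 1) x"
    using ext_basis[OF MC aD BC, of "\<lambda>e. snd (Q e)" "n + 1"] Q BCs by blast
  have z1: "g1 0 = 0" "KD1 0 = 0" "KC1 0 = 0" "M1 0 = 0"
    using lin_on_0[OF lg1 acc_0[OF aD]] lin_on_0[OF lKD1 acc_0[OF aD]]
      lin_on_0[OF lKC1 acc_0[OF aC]] lin_on_0[OF lM1 acc_0[OF aC]] by simp_all
  have dDn: "\<forall>x\<in>D n. dD n x \<in> D (n - 1)" using dDin by blast
  have dDn1: "\<forall>x\<in>D (n + 1). dD (n + 1) x \<in> D (n + 1 - 1)" using dDin by blast
  have dCn: "\<forall>x\<in>C n. dC n x \<in> C (n - 1)" using dCin by blast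
  have dCn1: "\<forall>x\<in>C (n - 1). dC (n - 1) x \<in> C (n - 1 - 1)" using dCin by blast
  have fn: "\<forall>x\<in>C n. f n x \<in> D n" using fin by blast
  have fn1: "\<forall>x\<in>C (n - 1). f (n - 1) x \<in> D (n - 1)" using fin by blast
  have gin': "\<forall>x\<in>D n. g x \<in> C n" and KDin': "\<forall>x\<in>D n. KD x \<in> D (n + 1)"
    and KCin': "\<forall>x\<in>C (n - 1). KC x \<in> C n" and Min': "\<forall>x\<in>C (n - 1). M x \<in> D (n + 1)"
    using gin KDin KCin Min by auto
  have E1: "\<forall>y\<in>D n. dC n (g y) = g1 (dD n y)"
  proof
    fix y assume y: "y \<in> D n"
    have hl: "lin_on sD sC (D n) (\<lambda>y. dC n (g y) - g1 (dD n y))"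
      by (rule lin_on_minus[OF lin_on_comp[OF glin gin' dClin] lin_on_comp[OF dDlin dDn lg1] MC])
    have "dC n (g y) - g1 (dD n y) = 0"
    proof (rule lin_on_zero_span[OF hl spBD MD MC _ y], intro ballI)
      fix e assume e: "e \<in> BD"
      then show "dC n (g e) - g1 (dD n e) = 0" using gB P BDs by auto
    qed
    then show "dC n (g y) = g1 (dD n y)" by simp
  qed
  have E3: "\<forall>y\<in>D n. dD (n + 1) (KD y) + KD1 (dD n y) = y - f n (g y)"
  proof
    fix y assume y: "y \<in> D n"
    have dDn1': "\<forall>x\<in>D (n + 1). dD (n + 1) x \<in> D n" using dDn1 by simp
    have hl: "lin_on sD sD (D n) (\<lambda>y. (dD (n + 1) (KD y) + KD1 (dD n y)) - (y - f n (g y)))"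
      by (rule lin_on_minus[OF lin_on_plus[OF lin_on_comp[OF KDlin KDin' dDlin] lin_on_comp[OF dDlin dDn lKD1] MD]
            lin_on_minus[OF lin_on_id lin_on_comp[OF glin gin' flin] MD] MD])
    have "(dD (n + 1) (KD y) + KD1 (dD n y)) - (y - f n (g y)) = 0"
    proof (rule lin_on_zero_span[OF hl spBD MD MD _ y], intro ballI)
      fix e assume e: "e \<in> BD"
      then have "f n (fst (P e)) + dD (n + 1) (snd (P e)) = e - KD1 (dD n e)" using P BDs by auto
      then show "(dD (n + 1) (KD e) + KD1 (dD n e)) - (e - f n (g e)) = 0"
        using gB KDB e by (simp add: algebra_simps)
    qed
    then show "dD (n + 1) (KD y) + KD1 (dD n y) = y - f n (g y)" by simp
  qed
  have E2: "\<forall>x\<in>C (n - 1). dC n (KC x) + KC1 (dC (n - 1) x) = x - g1 (f (n - 1) x)"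
  proof
    fix x assume x: "x \<in> C (n - 1)"
    have hl: "lin_on sC sC (C (n - 1)) (\<lambda>x. (dC n (KC x) + KC1 (dC (n - 1) x)) - (x - g1 (f (n - 1) x)))"
      by (rule lin_on_minus[OF lin_on_plus[OF lin_on_comp[OF KClin KCin' dClin] lin_on_comp[OF dClin dCn1 lKC1] MC]
            lin_on_minus[OF lin_on_id lin_on_comp[OF flin fn1 lg1] MC] MC])
    have "(dC n (KC x) + KC1 (dC (n - 1) x)) - (x - g1 (f (n - 1) x)) = 0"
    proof (rule lin_on_zero_span[OF hl spBC MC MC _ x], intro ballI)
      fix e assume e: "e \<in> BC"
      then have q: "fst (Q e) \<in> C n" "dC n (fst (Q e)) = - (e - KC1 (dC (n - 1) e) - g1 (f (n - 1) e))"
        using Q BCs by auto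
      have "dC n (KC e) = - dC n (fst (Q e))" using KCB e lin_on_neg[OF dClin sC MC q(1)] by simp
      then show "(dC n (KC e) + KC1 (dC (n - 1) e)) - (e - g1 (f (n - 1) e)) = 0"
        using q(2) by (simp add: algebra_simps)
    qed
    then show "dC n (KC x) + KC1 (dC (n - 1) x) = x - g1 (f (n - 1) x)" by simp
  qed
  have E4: "\<forall>x\<in>C (n - 1). dD (n + 1) (M x) - f n (KC x) - M1 (dC (n - 1) x) + KD1 (f (n - 1) x) = 0"
  proof
    fix x assume x: "x \<in> C (n - 1)"
    have hl: "lin_on sC sD (C (n - 1)) (\<lambda>x. dD (n + 1) (M x) - f n (KC x) - M1 (dC (n - 1) x) + KD1 (f (n - 1) x))"
      by (rule lin_on_plus[OF lin_on_minus[OF lin_on_minus[OF lin_on_comp[OF Mlin Min' dDlin]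
            lin_on_comp[OF KClin KCin' flin] MD] lin_on_comp[OF dClin dCn1 lM1] MD] lin_on_comp[OF flin fn1 lKD1] MD])
    show "dD (n + 1) (M x) - f n (KC x) - M1 (dC (n - 1) x) + KD1 (f (n - 1) x) = 0"
    proof (rule lin_on_zero_span[OF hl spBC MC MD _ x], intro ballI)
      fix e assume e: "e \<in> BC"
      then have q: "fst (Q e) \<in> C n" "f n (fst (Q e)) + dD (n + 1) (snd (Q e)) = M1 (dC (n - 1) e) - KD1 (f (n - 1) e)"
        using Q BCs by auto
      have "f n (KC e) = - f n (fst (Q e))" using KCB e lin_on_neg[OF flin sC MC q(1)] by simp
      then show "dD (n + 1) (M e) - f n (KC e) - M1 (dC (n - 1) e) + KD1 (f (n - 1) e) = 0"
        using q(2) MB e by (simp add: algebra_simps)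
    qed
  qed
  have "good sC C dC lC sD D dD lD f n g1 KD1 KC1 M1 g KD KC M"
    unfolding good_def using gin KDin KCin Min glin KDlin KClin Mlin z1 E1 E2 E3 E4 by blast
  then show ?thesis by blast
qed

lemma good_1: "good sC C dC lC sD D dD lD f n g' KD' KC' M' g KD KC M \<Longrightarrow>
  \<forall>y\<in>D n. g y \<in> C n \<and> lC n (g y) \<le> lD n y \<and> KD y \<in> D (n + 1) \<and> lD (n + 1) (KD y) \<le> lD n y"
  unfolding good_def by (elim conjE) assumption
lemma good_2: "good sC C dC lC sD D dD lD f n g' KD' KC' M' g KD KC M \<Longrightarrow>
  \<forall>x\<in>C (n - 1). KC x \<in> C n \<and> lC n (KC x) \<le> lC (n - 1) x \<and> M x \<in> D (n + 1) \<and> lD (n + 1) (M x) \<le> lC (n - 1) x"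
  unfolding good_def by (elim conjE) assumption
lemma good_lg: "good sC C dC lC sD D dD lD f n g' KD' KC' M' g KD KC M \<Longrightarrow> lin_on sD sC (D n) g"
  unfolding good_def by (elim conjE) assumption
lemma good_lKD: "good sC C dC lC sD D dD lD f n g' KD' KC' M' g KD KC M \<Longrightarrow> lin_on sD sD (D n) KD"
  unfolding good_def by (elim conjE) assumption
lemma good_lKC: "good sC C dC lC sD D dD lD f n g' KD' KC' M' g KD KC M \<Longrightarrow> lin_on sC sC (C (n - 1)) KC"
  unfolding good_def by (elim conjE) assumption
lemma good_E1: "good sC C dC lC sD D dD lD f n g' KD' KC' M' g KD KC M \<Longrightarrow>
  \<forall>y\<in>D n. dC n (g y) = g' (dD n y)"
  unfolding good_def by (elim conjE) assumption
lemma good_E3: "good sC C dC lC sD D dD lD f n g' KD' KC' M' g KD KC M \<Longrightarrow>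
  \<forall>y\<in>D n. dD (n + 1) (KD y) + KD' (dD n y) = y - f n (g y)"
  unfolding good_def by (elim conjE) assumption
lemma good_E2: "good sC C dC lC sD D dD lD f n g' KD' KC' M' g KD KC M \<Longrightarrow>
  \<forall>x\<in>C (n - 1). dC n (KC x) + KC' (dC (n - 1) x) = x - g' (f (n - 1) x)"
  unfolding good_def by (elim conjE) assumption

theorem proposition4p2:
  fixes sC :: "'k::field \<Rightarrow> 'v::ab_group_add \<Rightarrow> 'v"
    and sD :: "'k \<Rightarrow> 'w::ab_group_add \<Rightarrow> 'w"
    and C :: "int \<Rightarrow> 'v set" and dC :: "int \<Rightarrow> 'v \<Rightarrow> 'v" and lC :: "int \<Rightarrow> 'v \<Rightarrow> ereal"
    and D :: "int \<Rightarrow> 'w set" and dD :: "int \<Rightarrow> 'w \<Rightarrow> 'w" and lD :: "int \<Rightarrow> 'w \<Rightarrow> ereal"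
    and f :: "int \<Rightarrow> 'v \<Rightarrow> 'w"
  assumes "asc_chain_complex sC C dC lC"
    and "asc_chain_complex sD D dD lD"
    and "\<forall>k. \<exists>B. orth_basis sC (C k) (lC k) B"
    and "\<forall>k. \<exists>B. orth_basis sD (D k) (lD k) B"
    and "\<forall>k<0. C k = {0}"
    and "\<forall>k<0. D k = {0}"
    and "filtered_quasi_iso sC C dC lC sD D dD lD f"
  shows "filtered_homotopy_equiv sC C dC lC sD D dD lD f"
proof -
  note aC = assms(1) and aD = assms(2) and obC = assms(3) and obD = assms(4)
    and C0 = assms(5) and D0 = assms(6)
  have fcm: "filtered_chain_map sC C dC lC sD D dD lD f"
    using assms(7) unfolding filtered_quasi_iso_def by (elim conjE) assumption
  have qi: "\<forall>k t. induces_homology_iso C dC lC D dD lD f t k"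
    using assms(7) unfolding filtered_quasi_iso_def by (elim conjE) assumption
  have MC: "module sC" using acc_vs[OF aC] .
  have MD: "module sD" using acc_vs[OF aD] .
  define goodT where "goodT = (\<lambda>n p q. good sC C dC lC sD D dD lD f n
      (fst p) (fst (snd p)) (fst (snd (snd p))) (snd (snd (snd p)))
      (fst q) (fst (snd q)) (fst (snd (snd q))) (snd (snd (snd q))))"
  define Z where "Z = ((\<lambda>_::'w. 0::'v), (\<lambda>_::'w. 0::'w), (\<lambda>_::'v. 0::'v), (\<lambda>_::'v. 0::'w))"
  define st where "st = rec_nat Z (\<lambda>m s. SOME q. goodT (int m) s q)"
  have st0: "st 0 = Z" unfolding st_def by simp
  have stS: "st (Suc m) = (SOME q. goodT (int m) (st m) q)" for m unfolding st_def by simp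
  have J: "goodT (int m - 1) (st (m - 1)) (st m)" for m
  proof (induction m)
    case 0
    show ?case unfolding goodT_def using good_base[OF aC aD fcm C0 D0] by (simp add: st0 Z_def)
  next
    case (Suc m)
    have "\<exists>g KD KC M. good sC C dC lC sD D dD lD f (int m) (fst (st m)) (fst (snd (st m)))
        (fst (snd (snd (st m)))) (snd (snd (snd (st m)))) g KD KC M"
      by (rule good_step[OF aC aD fcm qi obC obD]) (use Suc.IH in \<open>simp add: goodT_def\<close>)
    then have "\<exists>q. goodT (int m) (st m) q" unfolding goodT_def by auto
    then have "goodT (int m) (st m) (st (Suc m))" unfolding stS by (rule someI_ex)
    then show ?case by simp
  qed
  define G where "G = (\<lambda>k. fst (st (nat (k + 1))))"
  define KDf where "KDf = (\<lambda>k. fst (snd (st (nat (k + 1)))))"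
  define KCf where "KCf = (\<lambda>k. fst (snd (snd (st (nat (k + 2))))))"
  define Mf where "Mf = (\<lambda>k. snd (snd (snd (st (nat (k + 2))))))"
  have GK: "good sC C dC lC sD D dD lD f k (G (k - 1)) (KDf (k - 1)) (KCf (k - 2)) (Mf (k - 2))
      (G k) (KDf k) (KCf (k - 1)) (Mf (k - 1))" if k: "-1 \<le> k" for k
  proof -
    have a: "int (nat (k + 1)) - 1 = k" using k by simp
    have b: "nat (k + 1) - 1 = nat k" using k by (simp add: nat_diff_distrib')
    have e: "k - 1 + 1 = k" "k - 2 + 2 = k" "k - 1 + 2 = k + 1" by simp_all
    have "goodT k (st (nat k)) (st (nat (k + 1)))" using J[of "nat (k + 1)"] unfolding a b .
    then show ?thesis unfolding G_def KDf_def KCf_def Mf_def e goodT_def by simp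
  qed
  have GK1: "good sC C dC lC sD D dD lD f (k + 1) (G k) (KDf k) (KCf (k - 1)) (Mf (k - 1))
      (G (k + 1)) (KDf (k + 1)) (KCf k) (Mf k)" if k: "-2 \<le> k" for k
  proof -
    have e: "k + 1 - 1 = k" "k + 1 - 2 = k - 1" by simp_all
    have "-1 \<le> k + 1" using k by simp
    from GK[OF this] show ?thesis unfolding e .
  qed
  have Zk: "G k = (\<lambda>_. 0) \<and> KDf k = (\<lambda>_. 0)" if "k < -1" for k
  proof -
    have "nat (k + 1) = 0" using that by simp
    then show ?thesis unfolding G_def KDf_def by (simp add: st0 Z_def)
  qed
  have Zk2: "KCf k = (\<lambda>_. 0)" if "k < -2" for k
  proof -
    have "nat (k + 2) = 0" using that by simp
    then show ?thesis unfolding KCf_def by (simp add: st0 Z_def)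
  qed
  have f0: "f k 0 = 0" for k using lin_on_0[OF fcm_lin[OF fcm] acc_0[OF aC]] .
  have lz: "lin_on s1 s2 A (\<lambda>_. 0)" if "module s2" for s1 s2 A using lin_on_zero[OF that] .
  have gcm: "filtered_chain_map sD D dD lD sC C dC lC G"
    unfolding filtered_chain_map_def
  proof (intro conjI allI ballI)
    fix k y assume y: "y \<in> D k"
    show "G k y \<in> C k"
    proof (cases "-1 \<le> k")
      case True then show ?thesis using good_1[OF GK[OF True]] y by blast
    next
      case False then show ?thesis using Zk[of k] acc_0[OF aC] by simp
    qed
    show "lC k (G k y) \<le> lD k y"
    proof (cases "-1 \<le> k")
      case True then show ?thesis using good_1[OF GK[OF True]] y by blast
    next
      case False then show ?thesis using Zk[of k] acc_l0[OF aC] by simp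
    qed
    show "dC k (G k y) = G (k - 1) (dD k y)"
    proof (cases "-1 \<le> k")
      case True then show ?thesis using good_E1[OF GK[OF True]] y by blast
    next
      case False
      then have "y = 0" using D0 y by simp
      then show ?thesis using False Zk[of k] Zk[of "k - 1"] acc_d0[OF aC] acc_d0[OF aD] by simp
    qed
  next
    fix k
    show "lin_on sD sC (D k) (G k)"
    proof (cases "-1 \<le> k")
      case True then show ?thesis using good_lg[OF GK[OF True]] by blast
    next
      case False then show ?thesis using Zk[of k] lz[OF MC] by simp
    qed
  qed
  have KCop: "filtered_homotopy_op sC C lC KCf"
    unfolding filtered_homotopy_op_def
  proof (intro conjI allI ballI)
    fix k x assume x: "x \<in> C k"
    show "KCf k x \<in> C (k + 1)"
    proof (cases "-2 \<le> k")
      case True then show ?thesis using good_2[OF GK1[OF True]] x by simp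
    next
      case False then show ?thesis using Zk2[of k] acc_0[OF aC] by simp
    qed
    show "lC (k + 1) (KCf k x) \<le> lC k x"
    proof (cases "-2 \<le> k")
      case True then show ?thesis using good_2[OF GK1[OF True]] x by simp
    next
      case False then show ?thesis using Zk2[of k] acc_l0[OF aC] by simp
    qed
  next
    fix k
    show "lin_on sC sC (C k) (KCf k)"
    proof (cases "-2 \<le> k")
      case True then show ?thesis using good_lKC[OF GK1[OF True]] by simp
    next
      case False then show ?thesis using Zk2[of k] lz[OF MC] by simp
    qed
  qed
  have KDop: "filtered_homotopy_op sD D lD KDf"
    unfolding filtered_homotopy_op_def
  proof (intro conjI allI ballI)
    fix k y assume y: "y \<in> D k"
    show "KDf k y \<in> D (k + 1)"
    proof (cases "-1 \<le> k")
      case True then show ?thesis using good_1[OF GK[OF True]] y by blast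
    next
      case False then show ?thesis using Zk[of k] acc_0[OF aD] by simp
    qed
    show "lD (k + 1) (KDf k y) \<le> lD k y"
    proof (cases "-1 \<le> k")
      case True then show ?thesis using good_1[OF GK[OF True]] y by blast
    next
      case False then show ?thesis using Zk[of k] acc_l0[OF aD] by simp
    qed
  next
    fix k
    show "lin_on sD sD (D k) (KDf k)"
    proof (cases "-1 \<le> k")
      case True then show ?thesis using good_lKD[OF GK[OF True]] by blast
    next
      case False then show ?thesis using Zk[of k] lz[OF MD] by simp
    qed
  qed
  have HC: "\<forall>k. \<forall>x\<in>C k. dC (k + 1) (KCf k x) + KCf (k - 1) (dC k x) = x - G k (f k x)"
  proof (intro allI ballI)
    fix k x assume x: "x \<in> C k"
    show "dC (k + 1) (KCf k x) + KCf (k - 1) (dC k x) = x - G k (f k x)"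
    proof (cases "-2 \<le> k")
      case True then show ?thesis using good_E2[OF GK1[OF True]] x by simp
    next
      case False
      then have "x = 0" using C0 x by simp
      then show ?thesis using False Zk2[of k] Zk2[of "k - 1"] Zk[of k] acc_d0[OF aC] f0 by simp
    qed
  qed
  have HD: "\<forall>k. \<forall>y\<in>D k. dD (k + 1) (KDf k y) + KDf (k - 1) (dD k y) = y - f k (G k y)"
  proof (intro allI ballI)
    fix k y assume y: "y \<in> D k"
    show "dD (k + 1) (KDf k y) + KDf (k - 1) (dD k y) = y - f k (G k y)"
    proof (cases "-1 \<le> k")
      case True then show ?thesis using good_E3[OF GK[OF True]] y by blast
    next
      case False
      then have "y = 0" using D0 y by simp
      then show ?thesis using False Zk[of k] Zk[of "k - 1"] acc_d0[OF aD] f0 by simp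
    qed
  qed
  show ?thesis unfolding filtered_homotopy_equiv_def
    using fcm gcm KCop KDop HC HD by blast
qed

end
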